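(* Let $\omega\colon\mathbf Z_+\to(0,+\infty)$ be a weight which is bounded from below, such that $\mathcal T$ is bounded on $\mathcal X_\omega$, and such that there exists $\rho>1$ for which the sequence $(\rho^n/\omega(k2^n))_{n\ge0}$ is bounded for every $k\ge3$. Then $\mathcal T$ satisfies the Godefroy–Shapiro Criterion on $\mathcal X_\omega$, i.e. both subspaces $\mathrm{span}[\ker(\mathcal T-\mu);\ |\mu|<1]$ and $\mathrm{span}[\ker(\mathcal T-\mu);\ |\mu|>1]$ are dense in $\mathcal X_\omega$. In particular this holds for $\omega=\omega_0$, $\omega_0(n)=(n+1)/\pi$ (with $\rho=2$).
   Context: $T\colon\mathbf Z_+\to\mathbf Z_+$ is the modified Collatz map: $T(n)=n/2$ for $n$ even, $T(n)=(3n+1)/2$ for $n$ odd. $\mathcal X_\omega$ is the Hilbert space of holomorphic functions $f(z)=\sum_{n\ge3}c_nz^n$ on the unit disk with $\|f\|_\omega^2=\sum_{n\ge3}|c_n|^2/\omega(n)<\infty$. $\mathcal T\sum_{n\ge3}c_nz^n=\sum_{j\ge3,\,T(j)\ge3}c_jz^{T(j)}$. $\mathcal T$ is bounded on $\mathcal X_\omega$ iff the sequences $\omega(6m)/\omega(3m)$, $\omega(6m+2)/\omega(3m+1)$, $(\omega(6m+4)+\omega(2m+1))/\omega(3m+2)$ ($m\ge1$) are bounded; this holds for $\omega_0$. *)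

theory Defs
  imports "HOL-Analysis.Analysis"
begin

definition collatz :: "nat \<Rightarrow> nat" where
  "collatz n = (if even n then n div 2 else (3 * n + 1) div 2)"

text \<open>Elements of X_omega are represented by their Taylor coefficient sequences
  c (f(z) = sum c n z^n): c n = 0 for n < 3, the power series converges on the
  open unit disk (f holomorphic there), and the weighted l2 norm is finite.\<close>
definition Xw :: "(nat \<Rightarrow> real) \<Rightarrow> (nat \<Rightarrow> complex) set" where
  "Xw \<omega> = {c. (\<forall>n<3. c n = 0)
              \<and> (\<forall>z::complex. norm z < 1 \<longrightarrow> summable (\<lambda>n. c n * z ^ n))
              \<and> summable (\<lambda>n. (cmod (c n))\<^sup>2 / \<omega> n)}"

definition wnorm :: "(nat \<Rightarrow> real) \<Rightarrow> (nat \<Rightarrow> complex) \<Rightarrow> real" where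
  "wnorm \<omega> c = sqrt (\<Sum>n. (cmod (c n))\<^sup>2 / \<omega> n)"

text \<open>The operator T on coefficient sequences:
  T (sum_{n>=3} c_n z^n) = sum_{j>=3, collatz j >= 3} c_j z^(collatz j).\<close>
definition Top :: "(nat \<Rightarrow> complex) \<Rightarrow> (nat \<Rightarrow> complex)" where
  "Top c m = (if m < 3 then 0 else (\<Sum>j\<in>{j. 3 \<le> j \<and> collatz j = m}. c j))"

definition T_bounded :: "(nat \<Rightarrow> real) \<Rightarrow> bool" where
  "T_bounded \<omega> \<longleftrightarrow> (\<exists>C. \<forall>c\<in>Xw \<omega>. Top c \<in> Xw \<omega> \<and> wnorm \<omega> (Top c) \<le> C * wnorm \<omega> c)"

definition eigsp :: "(nat \<Rightarrow> real) \<Rightarrow> complex \<Rightarrow> (nat \<Rightarrow> complex) set" where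
  "eigsp \<omega> \<mu> = {c \<in> Xw \<omega>. Top c = (\<lambda>n. \<mu> * c n)}"

definition cspan :: "(nat \<Rightarrow> complex) set \<Rightarrow> (nat \<Rightarrow> complex) set" where
  "cspan S = {f. \<exists>N (a::nat \<Rightarrow> complex) v. (\<forall>i<N. v i \<in> S)
                   \<and> f = (\<lambda>n. \<Sum>i<N. a i * v i n)}"

definition dense_in_Xw :: "(nat \<Rightarrow> real) \<Rightarrow> (nat \<Rightarrow> complex) set \<Rightarrow> bool" where
  "dense_in_Xw \<omega> S \<longleftrightarrow>
     (\<forall>c\<in>Xw \<omega>. \<forall>\<epsilon>>0. \<exists>d\<in>S. wnorm \<omega> (\<lambda>n. c n - d n) < \<epsilon>)"

definition godefroy_shapiro :: "(nat \<Rightarrow> real) \<Rightarrow> bool" where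
  "godefroy_shapiro \<omega> \<longleftrightarrow>
     dense_in_Xw \<omega> (cspan (\<Union>\<mu>\<in>{\<mu>. cmod \<mu> < 1}. eigsp \<omega> \<mu>)) \<and>
     dense_in_Xw \<omega> (cspan (\<Union>\<mu>\<in>{\<mu>. cmod \<mu> > 1}. eigsp \<omega> \<mu>))"

definition omega0 :: "nat \<Rightarrow> real" where
  "omega0 n = (real n + 1) / pi"

end

theory Submission
  imports Defs
begin

definition LL :: "(nat \<Rightarrow> real) \<Rightarrow> (nat \<Rightarrow> complex) set" where
  "LL \<omega> = {c. (\<forall>n<3. c n = 0) \<and> summable (\<lambda>n. (cmod (c n))\<^sup>2 / \<omega> n)}"

definition WW :: "(nat \<Rightarrow> real) \<Rightarrow> (nat \<Rightarrow> complex) \<Rightarrow> real" where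
  "WW \<omega> c = (\<Sum>n. (cmod (c n))\<^sup>2 / \<omega> n)"

lemma wnorm_WW: "wnorm \<omega> c = sqrt (WW \<omega> c)"
  by (simp add: wnorm_def WW_def)

lemma Xw_LL: "Xw \<omega> \<subseteq> LL \<omega>"
  by (auto simp: Xw_def LL_def)

lemma sq_add_le: "(cmod (a + b))\<^sup>2 \<le> 2 * (cmod a)\<^sup>2 + 2 * (cmod b)\<^sup>2"
proof -
  have "cmod (a+b) \<le> cmod a + cmod b" by (rule norm_triangle_ineq)
  then have "(cmod (a+b))\<^sup>2 \<le> (cmod a + cmod b)\<^sup>2"
    by (simp add: power_mono)
  also have "\<dots> \<le> 2 * (cmod a)\<^sup>2 + 2 * (cmod b)\<^sup>2"
  proof -
    have "0 \<le> (cmod a - cmod b)\<^sup>2" by simp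
    then show ?thesis unfolding power2_sum power2_diff by linarith
  qed
  finally show ?thesis .
qed

context
  fixes \<omega> :: "nat \<Rightarrow> real"
  assumes wpos: "\<forall>n\<ge>1. 0 < \<omega> n"
begin

lemma wpos3: "n \<ge> 3 \<Longrightarrow> 0 < \<omega> n" using wpos by auto

lemma term_nonneg: "c \<in> LL \<omega> \<Longrightarrow> 0 \<le> (cmod (c n))\<^sup>2 / \<omega> n"
  using wpos3[of n] by (cases "n < 3") (auto simp: LL_def)

lemma WW_nonneg: "c \<in> LL \<omega> \<Longrightarrow> 0 \<le> WW \<omega> c"
proof -
  assume c: "c \<in> LL \<omega>"
  have s1: "summable (\<lambda>n. (cmod (c n))\<^sup>2 / \<omega> n)" using c by (simp add: LL_def)
  show ?thesis unfolding WW_def by (rule suminf_nonneg[OF s1 term_nonneg[OF c]])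
qed

lemma LL_add: "c \<in> LL \<omega> \<Longrightarrow> d \<in> LL \<omega> \<Longrightarrow> (\<lambda>n. c n + d n) \<in> LL \<omega>"
proof -
  assume c: "c \<in> LL \<omega>" and d: "d \<in> LL \<omega>"
  have s1: "summable (\<lambda>n. (cmod (c n))\<^sup>2 / \<omega> n)" using c by (simp add: LL_def)
  have s2: "summable (\<lambda>n. (cmod (d n))\<^sup>2 / \<omega> n)" using d by (simp add: LL_def)
  have S: "summable (\<lambda>n. 2 * ((cmod (c n))\<^sup>2 / \<omega> n) + 2 * ((cmod (d n))\<^sup>2 / \<omega> n))"
    by (intro summable_add summable_mult s1 s2)
  have B: "norm ((cmod (c n + d n))\<^sup>2 / \<omega> n) \<le> 2 * ((cmod (c n))\<^sup>2 / \<omega> n) + 2 * ((cmod (d n))\<^sup>2 / \<omega> n)" for n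
  proof (cases "n < 3")
    case True then show ?thesis using c d by (auto simp: LL_def)
  next
    case False
    then have "0 < \<omega> n" using wpos3 by auto
    have "(cmod (c n + d n))\<^sup>2 / \<omega> n \<le> (2 * (cmod (c n))\<^sup>2 + 2 * (cmod (d n))\<^sup>2) / \<omega> n"
      by (rule divide_right_mono[OF sq_add_le]) (use \<open>0 < \<omega> n\<close> in simp)
    then show ?thesis using \<open>0 < \<omega> n\<close> by (simp add: add_divide_distrib)
  qed
  have "summable (\<lambda>n. (cmod (c n + d n))\<^sup>2 / \<omega> n)"
    by (rule summable_comparison_test'[OF S B])
  then show ?thesis using c d by (simp add: LL_def)
qed

lemma LL_scale: "c \<in> LL \<omega> \<Longrightarrow> (\<lambda>n. s * c n) \<in> LL \<omega>"
proof -
  assume c: "c \<in> LL \<omega>"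
  have s1: "summable (\<lambda>n. (cmod (c n))\<^sup>2 / \<omega> n)" using c by (simp add: LL_def)
  have "summable (\<lambda>n. (cmod s)\<^sup>2 * ((cmod (c n))\<^sup>2 / \<omega> n))"
    by (intro summable_mult s1)
  then show ?thesis using c by (simp add: LL_def norm_mult power_mult_distrib)
qed

lemma LL_zero: "(\<lambda>n. 0) \<in> LL \<omega>" by (simp add: LL_def)

lemma LL_diff: "c \<in> LL \<omega> \<Longrightarrow> d \<in> LL \<omega> \<Longrightarrow> (\<lambda>n. c n - d n) \<in> LL \<omega>"
  using LL_add[of c "\<lambda>n. (-1) * d n"] LL_scale[of d "-1"] by simp

lemma LL_sum: "(\<And>i. i \<in> A \<Longrightarrow> v i \<in> LL \<omega>) \<Longrightarrow> (\<lambda>n. \<Sum>i\<in>A. v i n) \<in> LL \<omega>"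
proof (induction A rule: infinite_finite_induct)
  case (infinite A) then show ?case by (simp add: LL_zero)
next
  case empty then show ?case by (simp add: LL_zero)
next
  case (insert x F)
  then show ?case using LL_add[of "v x" "\<lambda>n. \<Sum>i\<in>F. v i n"] by simp
qed

lemma WW_scale: "c \<in> LL \<omega> \<Longrightarrow> WW \<omega> (\<lambda>n. s * c n) = (cmod s)\<^sup>2 * WW \<omega> c"
proof -
  assume c: "c \<in> LL \<omega>"
  have s1: "summable (\<lambda>n. (cmod (c n))\<^sup>2 / \<omega> n)" using c by (simp add: LL_def)
  have "WW \<omega> (\<lambda>n. s * c n) = (\<Sum>n. (cmod s)\<^sup>2 * ((cmod (c n))\<^sup>2 / \<omega> n))"
    by (simp add: WW_def norm_mult power_mult_distrib)
  also have "\<dots> = (cmod s)\<^sup>2 * WW \<omega> c"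
    unfolding WW_def by (rule suminf_mult[OF s1])
  finally show ?thesis .
qed

lemma wnorm_scale: "c \<in> LL \<omega> \<Longrightarrow> wnorm \<omega> (\<lambda>n. s * c n) = cmod s * wnorm \<omega> c"
  by (simp add: wnorm_WW WW_scale real_sqrt_mult)

lemma wnorm_nonneg: "c \<in> LL \<omega> \<Longrightarrow> 0 \<le> wnorm \<omega> c"
  by (simp add: wnorm_WW WW_nonneg)

lemma partial_le: "c \<in> LL \<omega> \<Longrightarrow> (\<Sum>n<K. (cmod (c n))\<^sup>2 / \<omega> n) \<le> WW \<omega> c"
proof -
  assume c: "c \<in> LL \<omega>"
  have s1: "summable (\<lambda>n. (cmod (c n))\<^sup>2 / \<omega> n)" using c by (simp add: LL_def)
  show ?thesis unfolding WW_def
    by (rule sum_le_suminf[OF s1]) (auto intro: term_nonneg[OF c])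
qed

lemma wnorm_triangle: "c \<in> LL \<omega> \<Longrightarrow> d \<in> LL \<omega> \<Longrightarrow>
   wnorm \<omega> (\<lambda>n. c n + d n) \<le> wnorm \<omega> c + wnorm \<omega> d"
proof -
  assume c: "c \<in> LL \<omega>" and d: "d \<in> LL \<omega>"
  define f where "f n = cmod (c n) / sqrt (\<omega> n)" for n
  define g where "g n = cmod (d n) / sqrt (\<omega> n)" for n
  have fsq: "(f n)\<^sup>2 = (cmod (c n))\<^sup>2 / \<omega> n" for n
  proof (cases "n < 3")
    case True then show ?thesis using c by (simp add: LL_def f_def)
  next
    case False then have "0 < \<omega> n" using wpos3 by auto
    then show ?thesis by (simp add: f_def power_divide)
  qed
  have gsq: "(g n)\<^sup>2 = (cmod (d n))\<^sup>2 / \<omega> n" for n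
  proof (cases "n < 3")
    case True then show ?thesis using d by (simp add: LL_def g_def)
  next
    case False then have "0 < \<omega> n" using wpos3 by auto
    then show ?thesis by (simp add: g_def power_divide)
  qed
  have pt: "(cmod (c n + d n))\<^sup>2 / \<omega> n \<le> (f n + g n)\<^sup>2" for n
  proof (cases "n < 3")
    case True then show ?thesis using c d by (simp add: LL_def)
  next
    case False then have w: "0 < \<omega> n" using wpos3 by auto
    have "cmod (c n + d n) / sqrt (\<omega> n) \<le> (cmod (c n) + cmod (d n)) / sqrt (\<omega> n)"
      by (rule divide_right_mono[OF norm_triangle_ineq]) (use w in simp)
    also have "\<dots> = f n + g n" by (simp add: f_def g_def add_divide_distrib)
    finally have h: "cmod (c n + d n) / sqrt (\<omega> n) \<le> f n + g n" .
    have "0 \<le> cmod (c n + d n) / sqrt (\<omega> n)" using w by simp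
    from power_mono[OF h this, of 2] have "(cmod (c n + d n) / sqrt (\<omega> n))\<^sup>2 \<le> (f n + g n)\<^sup>2" .
    then show ?thesis using w by (simp add: power_divide)
  qed
  have pk: "(\<Sum>n<K. (cmod (c n + d n))\<^sup>2 / \<omega> n) \<le> (wnorm \<omega> c + wnorm \<omega> d)\<^sup>2" for K
  proof -
    have a1: "(\<Sum>n<K. (cmod (c n + d n))\<^sup>2 / \<omega> n) \<le> (\<Sum>n<K. (f n + g n)\<^sup>2)"
      by (rule sum_mono) (rule pt)
    have a2: "(\<Sum>n<K. (f n + g n)\<^sup>2) = (L2_set (\<lambda>n. f n + g n) {..<K})\<^sup>2"
      unfolding L2_set_def by (rule real_sqrt_pow2[symmetric]) (rule sum_nonneg, simp)
    have a3: "L2_set (\<lambda>n. f n + g n) {..<K} \<le> L2_set f {..<K} + L2_set g {..<K}"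
      by (rule L2_set_triangle_ineq)
    have a4: "L2_set f {..<K} \<le> wnorm \<omega> c"
      unfolding L2_set_def wnorm_WW fsq by (rule real_sqrt_le_mono[OF partial_le[OF c]])
    have a5: "L2_set g {..<K} \<le> wnorm \<omega> d"
      unfolding L2_set_def wnorm_WW gsq by (rule real_sqrt_le_mono[OF partial_le[OF d]])
    have a6: "L2_set (\<lambda>n. f n + g n) {..<K} \<le> wnorm \<omega> c + wnorm \<omega> d"
      using a3 a4 a5 by linarith
    have "(L2_set (\<lambda>n. f n + g n) {..<K})\<^sup>2 \<le> (wnorm \<omega> c + wnorm \<omega> d)\<^sup>2"
      by (rule power_mono[OF a6 L2_set_nonneg])
    then show ?thesis using a1 a2 by linarith
  qed
  have sm: "summable (\<lambda>n. (cmod (c n + d n))\<^sup>2 / \<omega> n)" using LL_add[OF c d] by (simp add: LL_def)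
  have "WW \<omega> (\<lambda>n. c n + d n) \<le> (wnorm \<omega> c + wnorm \<omega> d)\<^sup>2"
    unfolding WW_def by (rule suminf_le_const[OF sm pk])
  then have "sqrt (WW \<omega> (\<lambda>n. c n + d n)) \<le> sqrt ((wnorm \<omega> c + wnorm \<omega> d)\<^sup>2)"
    by (rule real_sqrt_le_mono)
  moreover have "sqrt ((wnorm \<omega> c + wnorm \<omega> d)\<^sup>2) = wnorm \<omega> c + wnorm \<omega> d"
    using wnorm_nonneg[OF c] wnorm_nonneg[OF d] by simp
  ultimately show ?thesis unfolding wnorm_WW by simp
qed

end

lemma sum_split_add: "(\<Sum>i<m+(n::nat). f i) = (\<Sum>i<m. f i) + (\<Sum>j<n. f (m+j))"
  by (induction n) (simp_all add: add_ac)

lemma cspanE: assumes "d \<in> cspan S" obtains N a v where "\<forall>i<(N::nat). v i \<in> S" "d = (\<lambda>n. \<Sum>i<N. a i * v i n)"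
  using assms unfolding cspan_def mem_Collect_eq by (elim exE conjE) (rule that; assumption)
lemma cspan_single: "(\<forall>i<(N::nat). v i \<in> S) \<Longrightarrow> (\<lambda>n. \<Sum>i<N. a i * v i n) \<in> cspan S"
  unfolding cspan_def mem_Collect_eq by (intro exI conjI) (assumption, rule refl)

lemma cspan_zero: "(\<lambda>n. 0) \<in> cspan S"
  using cspan_single[of 0 _ S] by simp

lemma cspan_add:
  assumes "d1 \<in> cspan S" "d2 \<in> cspan S"
  shows "(\<lambda>n. d1 n + d2 n) \<in> cspan S"
proof -
  obtain N1 a1 v1 where 1: "\<forall>i<(N1::nat). v1 i \<in> S" "d1 = (\<lambda>n. \<Sum>i<N1. a1 i * v1 i n)"
    using assms(1) by (rule cspanE)
  obtain N2 a2 v2 where 2: "\<forall>i<(N2::nat). v2 i \<in> S" "d2 = (\<lambda>n. \<Sum>i<N2. a2 i * v2 i n)"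
    using assms(2) by (rule cspanE)
  define a where "a i = (if i < N1 then a1 i else a2 (i - N1))" for i
  define v where "v i = (if i < N1 then v1 i else v2 (i - N1))" for i
  have "\<forall>i<N1+N2. v i \<in> S" using 1 2 by (auto simp: v_def)
  moreover have "(\<lambda>n. d1 n + d2 n) = (\<lambda>n. \<Sum>i<N1+N2. a i * v i n)"
    by (rule ext) (simp add: sum_split_add 1 2 a_def v_def)
  ultimately show ?thesis using cspan_single[of "N1+N2" v S a] by simp
qed

lemma cspan_scale:
  assumes "d \<in> cspan S"
  shows "(\<lambda>n. s * d n) \<in> cspan S"
proof -
  obtain N a v where 1: "\<forall>i<(N::nat). v i \<in> S" "d = (\<lambda>n. \<Sum>i<N. a i * v i n)"
    using assms(1) by (rule cspanE)
  have "(\<lambda>n. s * d n) = (\<lambda>n. \<Sum>i<N. (s * a i) * v i n)"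
    by (rule ext) (simp add: 1 sum_distrib_left mult.assoc)
  then show ?thesis using 1 cspan_single[of N v S "\<lambda>i. s * a i"] by simp
qed

lemma cspan_mono: "S \<subseteq> S' \<Longrightarrow> cspan S \<subseteq> cspan S'"
proof
  fix d assume S: "S \<subseteq> S'" and d: "d \<in> cspan S"
  from d obtain N a v where 1: "\<forall>i<(N::nat). v i \<in> S" "d = (\<lambda>n. \<Sum>i<N. a i * v i n)"
    by (rule cspanE)
  then show "d \<in> cspan S'" using S cspan_single[of N v S' a] by auto
qed

definition apx :: "(nat \<Rightarrow> real) \<Rightarrow> (nat \<Rightarrow> complex) set \<Rightarrow> (nat \<Rightarrow> complex) \<Rightarrow> bool" where
  "apx \<omega> S v \<longleftrightarrow> v \<in> LL \<omega> \<and> (\<forall>\<epsilon>>0. \<exists>d\<in>cspan S. d \<in> LL \<omega> \<and> wnorm \<omega> (\<lambda>n. v n - d n) < \<epsilon>)"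

lemma WW_zero: "WW \<omega> (\<lambda>n. 0) = 0" by (simp add: WW_def)
lemma wnorm_zero: "wnorm \<omega> (\<lambda>n. 0) = 0" by (simp add: wnorm_def)

context
  fixes \<omega> :: "nat \<Rightarrow> real"
  assumes wpos: "\<forall>n\<ge>1. 0 < \<omega> n"
begin

lemma cspan_LL: "S \<subseteq> LL \<omega> \<Longrightarrow> cspan S \<subseteq> LL \<omega>"
proof
  fix d assume S: "S \<subseteq> LL \<omega>" and d: "d \<in> cspan S"
  obtain N a v where 1: "\<forall>i<(N::nat). v i \<in> S" "d = (\<lambda>n. \<Sum>i<N. a i * v i n)"
    using d by (rule cspanE)
  have "(\<lambda>n. \<Sum>i\<in>{..<N}. a i * v i n) \<in> LL \<omega>"
    by (rule LL_sum[OF wpos], rule LL_scale[OF wpos]) (use 1 S in auto)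
  then show "d \<in> LL \<omega>" using 1 by simp
qed

lemma apx_add:
  assumes "apx \<omega> S v" "apx \<omega> S w"
  shows "apx \<omega> S (\<lambda>n. v n + w n)"
  unfolding apx_def
proof (intro conjI allI impI)
  show "(\<lambda>n. v n + w n) \<in> LL \<omega>" using assms LL_add[OF wpos] by (auto simp: apx_def)
  fix \<epsilon> :: real assume e: "\<epsilon> > 0"
  obtain d1 where d1: "d1 \<in> cspan S" "d1 \<in> LL \<omega>" "wnorm \<omega> (\<lambda>n. v n - d1 n) < \<epsilon>/2"
    using assms(1) e unfolding apx_def by (meson half_gt_zero)
  obtain d2 where d2: "d2 \<in> cspan S" "d2 \<in> LL \<omega>" "wnorm \<omega> (\<lambda>n. w n - d2 n) < \<epsilon>/2"
    using assms(2) e unfolding apx_def by (meson half_gt_zero)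
  have vL: "v \<in> LL \<omega>" "w \<in> LL \<omega>" using assms by (auto simp: apx_def)
  have "(\<lambda>n. v n + w n - (d1 n + d2 n)) = (\<lambda>n. (v n - d1 n) + (w n - d2 n))"
    by (rule ext) (simp add: algebra_simps)
  moreover have "wnorm \<omega> (\<lambda>n. (v n - d1 n) + (w n - d2 n)) \<le> wnorm \<omega> (\<lambda>n. v n - d1 n) + wnorm \<omega> (\<lambda>n. w n - d2 n)"
    by (rule wnorm_triangle[OF wpos]) (auto intro: LL_diff[OF wpos] vL d1 d2)
  ultimately have "wnorm \<omega> (\<lambda>n. v n + w n - (d1 n + d2 n)) < \<epsilon>" using d1 d2 by simp
  moreover have "(\<lambda>n. d1 n + d2 n) \<in> cspan S" by (rule cspan_add[OF d1(1) d2(1)])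
  moreover have "(\<lambda>n. d1 n + d2 n) \<in> LL \<omega>" by (rule LL_add[OF wpos d1(2) d2(2)])
  ultimately show "\<exists>d\<in>cspan S. d \<in> LL \<omega> \<and> wnorm \<omega> (\<lambda>n. v n + w n - d n) < \<epsilon>" by blast
qed

lemma apx_scale:
  assumes "apx \<omega> S v"
  shows "apx \<omega> S (\<lambda>n. s * v n)"
  unfolding apx_def
proof (intro conjI allI impI)
  have vL: "v \<in> LL \<omega>" using assms by (auto simp: apx_def)
  show "(\<lambda>n. s * v n) \<in> LL \<omega>" using LL_scale[OF wpos vL] .
  fix \<epsilon> :: real assume e: "\<epsilon> > 0"
  have s1: "0 < cmod s + 1" by (metis add_nonneg_pos norm_ge_zero zero_less_one)
  have e': "\<epsilon> / (cmod s + 1) > 0" using e s1 by (rule divide_pos_pos)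
  obtain d1 where d1: "d1 \<in> cspan S" "d1 \<in> LL \<omega>" "wnorm \<omega> (\<lambda>n. v n - d1 n) < \<epsilon> / (cmod s + 1)"
    using assms(1) e' unfolding apx_def by blast
  have dl: "(\<lambda>n. v n - d1 n) \<in> LL \<omega>" by (rule LL_diff[OF wpos vL d1(2)])
  have "(\<lambda>n. s * v n - s * d1 n) = (\<lambda>n. s * (v n - d1 n))"
    by (rule ext) (simp add: algebra_simps)
  then have "wnorm \<omega> (\<lambda>n. s * v n - s * d1 n) = cmod s * wnorm \<omega> (\<lambda>n. v n - d1 n)"
    using wnorm_scale[OF wpos dl, of s] by simp
  also have "\<dots> \<le> (cmod s + 1) * wnorm \<omega> (\<lambda>n. v n - d1 n)"
    using wnorm_nonneg[OF wpos dl] by (simp add: mult_right_mono)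
  also have "\<dots> < (cmod s + 1) * (\<epsilon> / (cmod s + 1))"
    using d1(3) s1 by (intro mult_strict_left_mono) auto
  also have "\<dots> = \<epsilon>" using s1 by simp
  finally have "wnorm \<omega> (\<lambda>n. s * v n - s * d1 n) < \<epsilon>" .
  moreover have "(\<lambda>n. s * d1 n) \<in> cspan S" by (rule cspan_scale[OF d1(1)])
  moreover have "(\<lambda>n. s * d1 n) \<in> LL \<omega>" by (rule LL_scale[OF wpos d1(2)])
  ultimately show "\<exists>d\<in>cspan S. d \<in> LL \<omega> \<and> wnorm \<omega> (\<lambda>n. s * v n - d n) < \<epsilon>" by blast
qed

lemma apx_diff:
  assumes "apx \<omega> S v" "apx \<omega> S w"
  shows "apx \<omega> S (\<lambda>n. v n - w n)"
  using apx_add[OF assms(1) apx_scale[OF assms(2), of "-1"]] by simp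

lemma apx_zero: "apx \<omega> S (\<lambda>n. 0)"
  unfolding apx_def
proof (intro conjI allI impI)
  show "(\<lambda>n. 0) \<in> LL \<omega>" by (rule LL_zero[OF wpos])
  fix \<epsilon> :: real assume "0 < \<epsilon>"
  moreover have "wnorm \<omega> (\<lambda>n. (0::complex) - 0) = 0" using wnorm_zero by simp
  ultimately show "\<exists>d\<in>cspan S. d \<in> LL \<omega> \<and> wnorm \<omega> (\<lambda>n. 0 - d n) < \<epsilon>"
    using cspan_zero[of S] LL_zero[OF wpos] by (intro bexI[of _ "\<lambda>n. 0"]) auto
qed

lemma apx_sum:
  "(\<And>i. i < (M::nat) \<Longrightarrow> apx \<omega> S (v i)) \<Longrightarrow> apx \<omega> S (\<lambda>n. \<Sum>i<M. v i n)"
proof (induction M)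
  case 0 then show ?case using apx_zero by simp
next
  case (Suc M)
  then have "apx \<omega> S (\<lambda>n. (\<Sum>i<M. v i n) + v M n)"
    by (intro apx_add) auto
  then show ?case by simp
qed

lemma apx_closed:
  assumes vL: "v \<in> LL \<omega>"
    and H: "\<And>\<epsilon>. \<epsilon> > 0 \<Longrightarrow> \<exists>w. apx \<omega> S w \<and> wnorm \<omega> (\<lambda>n. v n - w n) < \<epsilon>"
  shows "apx \<omega> S v"
  unfolding apx_def
proof (intro conjI allI impI vL)
  fix \<epsilon> :: real assume e: "\<epsilon> > 0"
  obtain w where w: "apx \<omega> S w" "wnorm \<omega> (\<lambda>n. v n - w n) < \<epsilon>/2"
    using H[of "\<epsilon>/2"] e by auto
  obtain d where d: "d \<in> cspan S" "d \<in> LL \<omega>" "wnorm \<omega> (\<lambda>n. w n - d n) < \<epsilon>/2"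
    using w(1) e unfolding apx_def by (meson half_gt_zero)
  have wL: "w \<in> LL \<omega>" using w(1) by (simp add: apx_def)
  have "(\<lambda>n. v n - d n) = (\<lambda>n. (v n - w n) + (w n - d n))" by (rule ext) simp
  moreover have "wnorm \<omega> (\<lambda>n. (v n - w n) + (w n - d n)) \<le> wnorm \<omega> (\<lambda>n. v n - w n) + wnorm \<omega> (\<lambda>n. w n - d n)"
    by (rule wnorm_triangle[OF wpos]) (auto intro: LL_diff[OF wpos] vL wL d)
  ultimately have "wnorm \<omega> (\<lambda>n. v n - d n) < \<epsilon>" using w d by simp
  then show "\<exists>d\<in>cspan S. d \<in> LL \<omega> \<and> wnorm \<omega> (\<lambda>n. v n - d n) < \<epsilon>" using d by blast
qed

lemma apx_mono: "S \<subseteq> S' \<Longrightarrow> apx \<omega> S v \<Longrightarrow> apx \<omega> S' v"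
  unfolding apx_def using cspan_mono[of S S'] by (meson subsetD)

end

definition chg :: "nat \<Rightarrow> (nat \<Rightarrow> complex) \<Rightarrow> nat \<Rightarrow> complex" where
  "chg k t p = (if \<exists>i. p = k*2^i then t (SOME i. p = k*2^i) else 0)"

lemma pow2_cancel: "k > 0 \<Longrightarrow> k*2^i = k*(2::nat)^j \<longleftrightarrow> i = j"
  by simp

lemma chg_at: "k > 0 \<Longrightarrow> chg k t (k*2^i) = t i"
proof -
  assume k: "k > 0"
  have "(SOME j. k*2^i = k*2^j) = i" by (rule some_equality) (use k in auto)
  then show ?thesis by (auto simp: chg_def)
qed

lemma chg_base: "k > 0 \<Longrightarrow> chg k t k = t 0"
  using chg_at[of k t 0] by simp

lemma chg_off: "\<not>(\<exists>i. p = k*2^i) \<Longrightarrow> chg k t p = 0" by (simp add: chg_def)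

lemma chg_small: "p < k \<Longrightarrow> chg k t p = 0"
proof (rule chg_off)
  assume pk: "p < k"
  show "\<not>(\<exists>i. p = k*2^i)"
  proof
    assume "\<exists>i. p = k*2^i"
    then obtain i where i: "p = k*2^i" by blast
    have "k \<le> k*2^i" by simp
    then show False using pk i by simp
  qed
qed

lemma strict_mono_chain: "(k::nat) > 0 \<Longrightarrow> strict_mono (\<lambda>i::nat. k * 2^i)"
proof -
  assume k: "k > 0"
  show ?thesis unfolding strict_mono_def
  proof (intro allI impI)
    fix x y :: nat assume "x < y"
    then have "(2::nat)^x < 2^y" by (rule power_strict_increasing) simp
    then show "k * 2^x < k * 2^y" using k by simp
  qed
qed

lemma chain_sums:
  assumes k: "(k::nat) > 0" and z: "\<And>p. (\<forall>i. p \<noteq> k*2^i) \<Longrightarrow> g p = 0"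
  shows "(\<lambda>i. g (k*2^i)) sums s \<longleftrightarrow> g sums s"
  by (rule sums_mono_reindex[OF strict_mono_chain[OF k]]) (use z in auto)

lemma chain_summable:
  assumes k: "(k::nat) > 0" and z: "\<And>p. (\<forall>i. p \<noteq> k*2^i) \<Longrightarrow> g p = 0"
  shows "summable (\<lambda>i. g (k*2^i)) \<longleftrightarrow> summable g"
  by (rule summable_mono_reindex[OF strict_mono_chain[OF k]]) (use z in auto)

lemma div3_odd: assumes "(m::nat) mod 3 = 2" shows "(2*m-1) div 3 = 2*(m div 3) + 1"
proof -
  define q where "q = m div 3"
  have m: "m = 3*q + 2" using div_mult_mod_eq[of m 3] assms unfolding q_def by linarith
  have "2*m - 1 = 3*(2*q+1)" unfolding m by simp
  then show ?thesis unfolding q_def[symmetric] by simp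
qed

lemma collatz_arith:
  assumes "m \<ge> 3" shows "(3 \<le> j \<and> collatz j = m) \<longleftrightarrow> (j = 2*m \<or> (m mod 3 = 2 \<and> j = (2*m-1) div 3))"
proof (cases "even j")
  case True
  then obtain h where h: "j = 2*h" by blast
  have c: "collatz j = h" unfolding collatz_def h by simp
  have n: "\<not> (m mod 3 = 2 \<and> 2*h = (2*m-1) div 3)"
  proof
    assume a: "m mod 3 = 2 \<and> 2*h = (2*m-1) div 3"
    then have "2*h = 2*(m div 3) + 1" using div3_odd by simp
    then show False by presburger
  qed
  show ?thesis unfolding c using n assms h by auto
next
  case False
  then obtain h where h: "j = 2*h+1" using oddE by blast
  have c: "collatz j = 3*h+2" unfolding collatz_def h by simp
  have d: "m = 3*(m div 3) + m mod 3" using div_mult_mod_eq[of m 3] by linarith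
  have "(3 \<le> j \<and> 3*h+2 = m) \<longleftrightarrow> (m mod 3 = 2 \<and> j = (2*m-1) div 3)"
  proof
    assume a: "3 \<le> j \<and> 3*h+2 = m"
    then have "m mod 3 = 2 \<and> m div 3 = h" by presburger
    then have "m mod 3 = 2" "m div 3 = h" by auto
    then show "m mod 3 = 2 \<and> j = (2*m-1) div 3" using div3_odd h by simp
  next
    assume a: "m mod 3 = 2 \<and> j = (2*m-1) div 3"
    then have "2*h+1 = 2*(m div 3) + 1" using div3_odd[of m] h by simp
    then have "h = m div 3" by simp
    then have "m = 3*h+2" using a d by simp
    then show "3 \<le> j \<and> 3*h+2 = m" using assms h by simp
  qed
  moreover have "j \<noteq> 2*m" using h by presburger
  ultimately show ?thesis unfolding c by blast
qed

lemma collatz_pre: assumes "m \<ge> 3"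
  shows "{j. 3 \<le> j \<and> collatz j = m} = (if m mod 3 = 2 then {2*m, (2*m-1) div 3} else {2*m})"
proof (rule set_eqI)
  fix j
  show "j \<in> {j. 3 \<le> j \<and> collatz j = m} \<longleftrightarrow> j \<in> (if m mod 3 = 2 then {2*m, (2*m-1) div 3} else {2*m})"
    using collatz_arith[OF assms, of j] by (cases "m mod 3 = 2") simp_all
qed

lemma ne_div3: "(m::nat) \<ge> 3 \<Longrightarrow> 2*m \<noteq> (2*m-1) div 3"
  using div_le_dividend[of "2*m-1" 3] by linarith



lemma Top_eq: assumes "m \<ge> 3"
  shows "Top c m = c (2*m) + (if m mod 3 = 2 then c ((2*m-1) div 3) else 0)"
proof -
  have ne: "2*m \<noteq> (2*m-1) div 3" using assms by (rule ne_div3)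
  have T: "Top c m = (\<Sum>j\<in>{j. 3 \<le> j \<and> collatz j = m}. c j)" using assms by (simp add: Top_def)
  show ?thesis
  proof (cases "m mod 3 = 2")
    case True
    then have "{j. 3 \<le> j \<and> collatz j = m} = {2*m, (2*m-1) div 3}" using collatz_pre[OF assms] by simp
    then show ?thesis using T True ne by simp
  next
    case False
    then have "{j. 3 \<le> j \<and> collatz j = m} = {2*m}" using collatz_pre[OF assms] by simp
    then show ?thesis using T False by simp
  qed
qed

lemma Top_diff: "Top (\<lambda>p. c p - d p) m = Top c m - Top d m"
  by (simp add: Top_def sum_subtractf)

lemma chg_double: assumes k: "k \<ge> 3"
  shows "chg k (\<lambda>i. \<mu>^i) (2*m) = \<mu> * chg k (\<lambda>i. \<mu>^i) m + (if 2*m = k then 1 else 0)"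
proof -
  have k0: "k > 0" using k by simp
  show ?thesis
  proof (cases "\<exists>i. m = k*2^i")
    case True
    then obtain i where i: "m = k*2^i" by blast
    have e: "2*m = k*2^(Suc i)" unfolding i by simp
    have ne: "2*m \<noteq> k"
    proof
      assume "2*m = k"
      then have "k*2^(Suc i) = k*2^0" using e by simp
      then show False using pow2_cancel[OF k0] by blast
    qed
    have c1: "chg k (\<lambda>i. \<mu>^i) (2*m) = \<mu>^(Suc i)" unfolding e by (rule chg_at[OF k0])
    have c2: "chg k (\<lambda>i. \<mu>^i) m = \<mu>^i" unfolding i by (rule chg_at[OF k0])
    show ?thesis unfolding c1 c2 using ne by simp
  next
    case False
    then have cm: "chg k (\<lambda>i. \<mu>^i) m = 0" by (rule chg_off)
    show ?thesis
    proof (cases "\<exists>i. 2*m = k*2^i")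
      case True
      then obtain i where i: "2*m = k*2^i" by blast
      show ?thesis
      proof (cases i)
        case 0
        then have e: "2*m = k" using i by simp
        have "chg k (\<lambda>i. \<mu>^i) (2*m) = 1" unfolding e using chg_base[OF k0, of "\<lambda>i. \<mu>^i"] by simp
        then show ?thesis unfolding cm using e by simp
      next
        case (Suc j)
        then have "2*m = 2*(k*2^j)" using i by simp
        then have "m = k*2^j" by linarith
        then show ?thesis using False by blast
      qed
    next
      case F2: False
      have "2*m \<noteq> k"
      proof
        assume "2*m = k" then have "2*m = k*2^0" by simp
        with F2 show False by blast
      qed
      then show ?thesis using chg_off[OF F2] cm by simp
    qed
  qed
qed

lemma chg_odd: assumes "odd j" "k > 0"
  shows "chg k t j = (if j = k then t 0 else 0)"
proof (cases "\<exists>i. j = k*2^i")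
  case True
  then obtain i where i: "j = k*2^i" by blast
  have "i = 0"
  proof (rule ccontr)
    assume "i \<noteq> 0"
    then have "even j" using i by (cases i) auto
    then show False using assms by simp
  qed
  moreover have "chg k t k = t 0" using chg_at[of k t 0] assms by simp
  ultimately show ?thesis using i by simp
next
  case False
  have "j \<noteq> k"
  proof
    assume "j = k" then have "j = k*2^0" by simp
    with False show False by blast
  qed
  then show ?thesis using False by (simp add: chg_off)
qed

lemma Top_chain: assumes k: "k \<ge> 3" and m: "m \<ge> 3"
  shows "Top (chg k (\<lambda>i. \<mu>^i)) m = \<mu> * chg k (\<lambda>i. \<mu>^i) m + (if collatz k = m then 1 else 0)"
proof -
  have ne: "2*m \<noteq> (2*m-1) div 3" using m by (rule ne_div3)
  have ck: "collatz k = m \<longleftrightarrow> (k = 2*m \<or> (m mod 3 = 2 \<and> k = (2*m-1) div 3))"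
    using collatz_arith[OF m, of k] k by simp
  show ?thesis
  proof (cases "m mod 3 = 2")
    case True
    have odd: "odd ((2*m-1) div 3)" using div3_odd[OF True] by simp
    have "chg k (\<lambda>i. \<mu>^i) ((2*m-1) div 3) = (if (2*m-1) div 3 = k then 1 else 0)"
      using chg_odd[OF odd, of k] k by simp
    then show ?thesis using True m ne ck by (auto simp: Top_eq chg_double[OF k])
  next
    case False
    then show ?thesis using m ck by (auto simp: Top_eq chg_double[OF k])
  qed
qed

definition Ev :: "nat \<Rightarrow> complex \<Rightarrow> nat \<Rightarrow> complex" where
  "Ev k \<mu> = (\<lambda>p. chg k (\<lambda>i. \<mu>^i) p - chg (3*k+1) (\<lambda>i. \<mu>^i) p)"

lemma collatz_3k1: "odd k \<Longrightarrow> collatz (3*k+1) = collatz k"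
  unfolding collatz_def by simp

lemma Top_Ev: assumes "odd k" "k \<ge> 3"
  shows "Top (Ev k \<mu>) = (\<lambda>n. \<mu> * Ev k \<mu> n)"
proof
  fix m
  show "Top (Ev k \<mu>) m = \<mu> * Ev k \<mu> m"
  proof (cases "m < 3")
    case True
    have "m < k" "m < 3*k+1" using True assms by auto
    then show ?thesis using True by (simp add: Top_def Ev_def chg_small)
  next
    case False
    then have m: "m \<ge> 3" by simp
    have k1: "3*k+1 \<ge> 3" using assms(2) by simp
    show ?thesis unfolding Ev_def Top_diff Top_chain[OF assms(2) m] Top_chain[OF k1 m]
      using collatz_3k1[OF assms(1)] by (simp add: algebra_simps)
  qed
qed

lemma Top_ch4: "Top (chg 4 (\<lambda>i. \<mu>^i)) = (\<lambda>n. \<mu> * chg 4 (\<lambda>i. \<mu>^i) n)"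
proof
  fix m
  show "Top (chg 4 (\<lambda>i. \<mu>^i)) m = \<mu> * chg 4 (\<lambda>i. \<mu>^i) m"
  proof (cases "m < 3")
    case True
    then show ?thesis by (simp add: Top_def chg_small)
  next
    case False
    then have m: "m \<ge> 3" by simp
    have "collatz 4 = 2" by (simp add: collatz_def)
    then show ?thesis using Top_chain[of 4 m \<mu>] m by simp
  qed
qed

lemma Xw_iff: "c \<in> Xw \<omega> \<longleftrightarrow> c \<in> LL \<omega> \<and> (\<forall>z. cmod z < 1 \<longrightarrow> summable (\<lambda>n. c n * z^n))"
  by (auto simp: Xw_def LL_def)

lemma i_le_k2i: "(k::nat) > 0 \<Longrightarrow> i \<le> k * 2^i"
proof -
  assume k: "k > 0"
  have "i < 2^i" by (rule less_exp)
  also have "(2::nat)^i \<le> k * 2^i" using k by simp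
  finally show ?thesis by simp
qed

lemma ps_chain:
  assumes k: "(k::nat) > 0" and z: "cmod z < 1"
  shows "summable (\<lambda>p. chg k (\<lambda>i. \<mu>^i) p * z^p)"
proof -
  define f where "f i = \<mu>^i * z^(k*2^i)" for i
  define c where "c = cmod \<mu>"
  have c0: "c \<ge> 0" by (simp add: c_def)
  have lim: "(\<lambda>i. cmod z ^ i) \<longlonglongrightarrow> 0" by (rule LIMSEQ_power_zero) (use z in simp)
  have pos: "0 < 1 / (2 * (c + 1))" using c0 by simp
  have "eventually (\<lambda>i. cmod z ^ i < 1 / (2 * (c + 1))) sequentially"
    by (rule order_tendstoD(2)[OF lim pos])
  then obtain N where N: "\<And>i. i \<ge> N \<Longrightarrow> cmod z ^ i < 1 / (2 * (c + 1))"
    by (auto simp: eventually_sequentially)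
  have "summable f"
  proof (rule summable_ratio_test[of "1/2" N])
    fix i assume i: "i \<ge> N"
    have e: "k*2^(Suc i) = k*2^i + k*2^i" by simp
    have eq: "norm (f (Suc i)) = (c * cmod z ^ (k*2^i)) * norm (f i)"
      unfolding f_def e c_def by (simp add: norm_mult norm_power power_add mult_ac)
    have "cmod z ^ (k*2^i) \<le> cmod z ^ i"
      by (rule power_decreasing) (use i_le_k2i[OF k] z in auto)
    also have "\<dots> \<le> 1 / (2 * (c + 1))" using N[OF i] by simp
    finally have zb: "cmod z ^ (k*2^i) \<le> 1 / (2 * (c + 1))" .
    have "c * cmod z ^ (k*2^i) \<le> (c + 1) * (1 / (2 * (c + 1)))"
      by (rule mult_mono) (use zb c0 in auto)
    also have "\<dots> = 1/2" using c0 by simp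
    finally have "c * cmod z ^ (k*2^i) \<le> 1/2" .
    then show "norm (f (Suc i)) \<le> 1/2 * norm (f i)"
      unfolding eq by (rule mult_right_mono) simp
  qed simp
  moreover have "(\<lambda>i. chg k (\<lambda>i. \<mu>^i) (k*2^i) * z^(k*2^i)) = f"
    by (rule ext) (simp add: f_def chg_at[OF k])
  ultimately have "summable (\<lambda>i. chg k (\<lambda>i. \<mu>^i) (k*2^i) * z^(k*2^i))" by simp
  then show ?thesis
    by (subst chain_summable[OF k, symmetric]) (auto simp: chg_off)
qed

lemma pow_sq_swap: "((x::real)^i)\<^sup>2 = (x\<^sup>2)^i"
  by (metis power_mult mult.commute)

context
  fixes \<omega> :: "nat \<Rightarrow> real"
  assumes wpos: "\<forall>n\<ge>1. 0 < \<omega> n"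
begin

lemma chg_LL:
  assumes k: "k \<ge> 3" and rho: "\<rho> > 0" and B: "\<forall>i. \<rho>^i / \<omega> (k*2^i) \<le> B"
    and sm: "summable (\<lambda>i. B * (cmod (t i))\<^sup>2 / \<rho>^i)"
  shows "chg k t \<in> LL \<omega> \<and> WW \<omega> (chg k t) \<le> (\<Sum>i. B * (cmod (t i))\<^sup>2 / \<rho>^i)"
proof -
  define g where "g = (\<lambda>p. (cmod (chg k t p))\<^sup>2 / \<omega> p)"
  have k0: "k > 0" using k by simp
  have gz: "\<And>p. (\<forall>i. p \<noteq> k*2^i) \<Longrightarrow> g p = 0" by (simp add: g_def chg_off)
  have gi: "g (k*2^i) = (cmod (t i))\<^sup>2 / \<omega> (k*2^i)" for i by (simp add: g_def chg_at[OF k0])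
  have wk: "\<omega> (k*2^i) > 0" for i
  proof -
    have "1 \<le> k*2^i" using k0 by simp
    then show ?thesis using wpos by simp
  qed
  have bnd: "g (k*2^i) \<le> B * (cmod (t i))\<^sup>2 / \<rho>^i" for i
  proof -
    have P: "\<rho>^i > 0" using rho by simp
    have "1 / \<omega> (k*2^i) = (\<rho>^i / \<omega> (k*2^i)) / \<rho>^i" using P rho by simp
    also have "\<dots> \<le> B / \<rho>^i" by (rule divide_right_mono) (use B P in auto)
    finally have "1 / \<omega> (k*2^i) \<le> B / \<rho>^i" .
    then have "(cmod (t i))\<^sup>2 * (1 / \<omega> (k*2^i)) \<le> (cmod (t i))\<^sup>2 * (B / \<rho>^i)"
      by (rule mult_left_mono) simp
    then show ?thesis unfolding gi by (simp add: mult.commute)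
  qed
  have nn: "0 \<le> g (k*2^i)" for i using wk[of i] by (simp add: gi)
  have sg': "summable (\<lambda>i. g (k*2^i))"
    by (rule summable_comparison_test'[OF sm]) (use bnd nn in auto)
  then have sg: "summable g" using chain_summable[of k g, OF k0 gz] by simp
  have z3: "\<forall>n<3. chg k t n = 0" using k by (auto intro: chg_small)
  have L: "chg k t \<in> LL \<omega>" using sg z3 by (simp add: LL_def g_def)
  have "(\<lambda>i. g (k*2^i)) sums (\<Sum>i. g (k*2^i))" using sg' by (rule summable_sums)
  then have "g sums (\<Sum>i. g (k*2^i))" using chain_sums[of k g, OF k0 gz] by simp
  then have W: "WW \<omega> (chg k t) = (\<Sum>i. g (k*2^i))" unfolding WW_def g_def[symmetric] by (rule sums_unique[symmetric])
  have "(\<Sum>i. g (k*2^i)) \<le> (\<Sum>i. B * (cmod (t i))\<^sup>2 / \<rho>^i)"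
    by (rule suminf_le[OF bnd sg' sm])
  then show ?thesis using L W by simp
qed

lemma geo_sm:
  assumes rho: "\<rho> > 0" and mu: "(cmod \<mu>)\<^sup>2 < \<rho>"
  shows "summable (\<lambda>i. B * (cmod (\<mu>^i))\<^sup>2 / \<rho>^i)"
proof -
  have "(\<lambda>i. B * (cmod (\<mu>^i))\<^sup>2 / \<rho>^i) = (\<lambda>i. B * ((cmod \<mu>)\<^sup>2 / \<rho>)^i)"
    by (rule ext) (simp add: norm_power pow_sq_swap power_divide)
  moreover have "summable (\<lambda>i. ((cmod \<mu>)\<^sup>2 / \<rho>)^i)"
    by (rule summable_geometric) (use rho mu in simp)
  ultimately show ?thesis by (metis summable_mult)
qed

lemma ch_Xw:
  assumes k: "k \<ge> 3" and rho: "\<rho> > 0" and B: "\<forall>i. \<rho>^i / \<omega> (k*2^i) \<le> B"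
    and mu: "(cmod \<mu>)\<^sup>2 < \<rho>"
  shows "chg k (\<lambda>i. \<mu>^i) \<in> Xw \<omega>"
  unfolding Xw_iff
proof (intro conjI allI impI)
  show "chg k (\<lambda>i. \<mu>^i) \<in> LL \<omega>" using chg_LL[OF k rho B geo_sm[OF rho mu]] by simp
  fix z :: complex assume "cmod z < 1"
  then show "summable (\<lambda>n. chg k (\<lambda>i. \<mu>^i) n * z^n)" using k by (intro ps_chain) auto
qed

lemma Ev_eig:
  assumes k: "odd k" "k \<ge> 3" and rho: "\<rho> > 0"
    and B1: "\<forall>i. \<rho>^i / \<omega> (k*2^i) \<le> B1" and B2: "\<forall>i. \<rho>^i / \<omega> ((3*k+1)*2^i) \<le> B2"
    and mu: "(cmod \<mu>)\<^sup>2 < \<rho>"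
  shows "Ev k \<mu> \<in> eigsp \<omega> \<mu>"
proof -
  have k1: "3*k+1 \<ge> 3" using k(2) by simp
  have X1: "chg k (\<lambda>i. \<mu>^i) \<in> Xw \<omega>" by (rule ch_Xw[OF k(2) rho B1 mu])
  have X2: "chg (3*k+1) (\<lambda>i. \<mu>^i) \<in> Xw \<omega>" by (rule ch_Xw[OF k1 rho B2 mu])
  have "Ev k \<mu> \<in> Xw \<omega>" unfolding Xw_iff
  proof (intro conjI allI impI)
    show "Ev k \<mu> \<in> LL \<omega>" unfolding Ev_def using X1 X2 by (intro LL_diff[OF wpos]) (auto simp: Xw_iff)
    fix z :: complex assume z: "cmod z < 1"
    have "summable (\<lambda>n. chg k (\<lambda>i. \<mu>^i) n * z^n - chg (3*k+1) (\<lambda>i. \<mu>^i) n * z^n)"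
      using X1 X2 z by (intro summable_diff) (auto simp: Xw_iff)
    then show "summable (\<lambda>n. Ev k \<mu> n * z^n)" by (simp add: Ev_def left_diff_distrib)
  qed
  then show ?thesis unfolding eigsp_def using Top_Ev[OF k] by simp
qed

lemma ch4_eig:
  assumes rho: "\<rho> > 0" and B: "\<forall>i. \<rho>^i / \<omega> (4*2^i) \<le> B" and mu: "(cmod \<mu>)\<^sup>2 < \<rho>"
  shows "chg 4 (\<lambda>i. \<mu>^i) \<in> eigsp \<omega> \<mu>"
  unfolding eigsp_def using ch_Xw[of 4 \<rho> B \<mu>] assms Top_ch4 by simp

end

definition zt :: "nat \<Rightarrow> complex" where "zt N = cis (2*pi / real N)"

lemma zt_pow: "zt N ^ m = cis (real m * (2*pi / real N))"
  unfolding zt_def by (rule Complex.DeMoivre)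

lemma zt_pow_N: "N > 0 \<Longrightarrow> zt N ^ N = 1"
  by (simp add: zt_pow)

lemma zt_norm: "cmod (zt N) = 1" by (simp add: zt_def)

lemma zt_pow_eq1: assumes N: "N > 0" shows "zt N ^ m = 1 \<longleftrightarrow> N dvd m"
proof
  assume "N dvd m"
  then obtain q where "m = N*q" by blast
  then show "zt N ^ m = 1" by (simp add: power_mult zt_pow_N[OF N])
next
  assume h: "zt N ^ m = 1"
  have "cos (real m * (2*pi / real N)) = Re (zt N ^ m)" by (simp add: zt_pow)
  also have "\<dots> = 1" using h by simp
  finally obtain n :: int where n: "real m * (2*pi / real N) = real_of_int n * 2 * pi"
    using cos_one_2pi_int by blast
  then have "real m = real N * real_of_int n" using N by (simp add: field_simps)
  then have "real_of_int (int m) = real_of_int (int N * n)" by simp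
  then have "int m = int N * n" by (simp only: of_int_eq_iff)
  then have "int N dvd int m" by simp
  then show "N dvd m" by simp
qed

lemma roots_sum: assumes N: "N > 0"
  shows "(\<Sum>j<N. (zt N ^ m)^j) = (if N dvd m then of_nat N else 0)"
proof (cases "N dvd m")
  case True
  then have "zt N ^ m = 1" using zt_pow_eq1[OF N] by simp
  then show ?thesis using True by simp
next
  case False
  then have ne: "zt N ^ m \<noteq> 1" using zt_pow_eq1[OF N] by simp
  have "(zt N ^ m)^N = (zt N ^ N)^m" by (simp add: power_mult[symmetric] mult.commute)
  also have "\<dots> = 1" by (simp add: zt_pow_N[OF N])
  finally have "(zt N ^ m)^N = 1" .
  then show ?thesis using False ne by (simp add: geometric_sum[OF ne])
qed

definition mu :: "real \<Rightarrow> nat \<Rightarrow> nat \<Rightarrow> complex" where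
  "mu r N j = complex_of_real r * zt N ^ j"

definition cf :: "real \<Rightarrow> nat \<Rightarrow> nat \<Rightarrow> nat \<Rightarrow> complex" where
  "cf r N n j = (zt N ^ j) ^ (n*(N-1)) / (of_nat N * complex_of_real r ^ n)"

definition AA :: "nat \<Rightarrow> real \<Rightarrow> nat \<Rightarrow> nat \<Rightarrow> nat \<Rightarrow> complex" where
  "AA k r N n p = (\<Sum>j<N. cf r N n j * chg k (\<lambda>i. (mu r N j)^i) p)"

definition de :: "nat \<Rightarrow> nat \<Rightarrow> complex" where
  "de x = (\<lambda>p. if p = x then 1 else 0)"

lemma mu_norm: "r \<ge> 0 \<Longrightarrow> cmod (mu r N j) = r"
  by (simp add: mu_def norm_mult norm_power zt_norm)

lemma pow_swap: "((w::complex)^j)^a * (c * w^j)^i = c^i * (w^(i+a))^j"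
proof -
  have "(c * w^j)^i = c^i * (w^j)^i" by (simp add: power_mult_distrib)
  moreover have "(w^j)^a * (w^j)^i = (w^j)^(i+a)" by (simp add: power_add mult.commute)
  moreover have "(w^j)^(i+a) = (w^(i+a))^j" by (simp add: power_mult[symmetric] mult.commute)
  ultimately show ?thesis by (simp add: mult_ac)
qed

lemma AA_at:
  assumes k: "k > 0" and N: "N > 0" and r: "r > 0"
  shows "AA k r N n (k*2^i) = (if N dvd (i + n*(N-1)) then complex_of_real (r^i / r^n) else 0)"
proof -
  have "AA k r N n (k*2^i) = (\<Sum>j<N. cf r N n j * (mu r N j)^i)"
    by (simp add: AA_def chg_at[OF k])
  also have "\<dots> = (\<Sum>j<N. (complex_of_real r ^ i / (of_nat N * complex_of_real r ^ n)) * (zt N ^ (i + n*(N-1)))^j)"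
  proof (rule sum.cong[OF refl])
    fix j
    have "cf r N n j * (mu r N j)^i = ((zt N ^ j) ^ (n*(N-1)) * (complex_of_real r * zt N ^ j)^i) / (of_nat N * complex_of_real r ^ n)"
      by (simp add: cf_def mu_def)
    also have "\<dots> = (complex_of_real r ^ i * (zt N ^ (i + n*(N-1)))^j) / (of_nat N * complex_of_real r ^ n)"
      by (simp only: pow_swap)
    finally show "cf r N n j * (mu r N j)^i = (complex_of_real r ^ i / (of_nat N * complex_of_real r ^ n)) * (zt N ^ (i + n*(N-1)))^j"
      by simp
  qed
  also have "\<dots> = (complex_of_real r ^ i / (of_nat N * complex_of_real r ^ n)) * (\<Sum>j<N. (zt N ^ (i + n*(N-1)))^j)"
    by (rule sum_distrib_left[symmetric])
  also have "\<dots> = (complex_of_real r ^ i / (of_nat N * complex_of_real r ^ n)) * (if N dvd (i + n*(N-1)) then of_nat N else 0)"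
    by (simp only: roots_sum[OF N])
  also have "\<dots> = (if N dvd (i + n*(N-1)) then complex_of_real (r^i / r^n) else 0)"
    using N r by (simp add: of_real_power)
  finally show ?thesis .
qed

lemma AA_off: "\<not>(\<exists>i. p = k*2^i) \<Longrightarrow> AA k r N n p = 0"
  by (simp add: AA_def chg_off)

lemma chg_diff_eq: "chg k a p - chg k b p = chg k (\<lambda>i. a i - b i) p"
  by (cases "\<exists>i. p = k*2^i") (simp_all add: chg_def)

lemma de_chg: assumes k: "k > 0" shows "de (k*2^n) p = chg k (\<lambda>i. if i = n then 1 else 0) p"
proof (cases "\<exists>i. p = k*2^i")
  case True
  then obtain i where i: "p = k*2^i" by blast
  show ?thesis unfolding i de_def chg_at[OF k] using pow2_cancel[OF k, of i n] by simp
next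
  case False
  then have "p \<noteq> k*2^n" by blast
  then show ?thesis using False by (simp add: de_def chg_off)
qed

lemma tail_idx:
  assumes nN: "n < (N::nat)" and d: "N dvd (i + n*(N-1))" and ne: "i \<noteq> n"
  shows "N \<le> i"
proof (rule ccontr)
  assume "\<not> N \<le> i"
  then have iN: "i < N" by simp
  have N0: "N > 0" using nN by simp
  have "(i + n*(N-1)) mod N = 0" using d by simp
  then have "((i + n*(N-1)) mod N + n) mod N = n mod N" by simp
  then have m: "(i + n*(N-1) + n) mod N = n mod N" by (simp add: mod_add_left_eq)
  have ee: "i + n*(N-1) + n = i + n*N" using N0 by (cases N) (simp_all add: algebra_simps)
  have "(i + n*N) mod N = n mod N" using m unfolding ee .
  then have "i mod N = n mod N" by simp
  then have "i = n" using iN nN by simp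
  then show False using ne by simp
qed

context
  fixes \<omega> :: "nat \<Rightarrow> real"
  assumes wpos: "\<forall>n\<ge>1. 0 < \<omega> n"
begin

lemma coeff_extract:
  assumes k: "k \<ge> 3" and rho: "\<rho> > 0" and B: "\<forall>i. \<rho>^i / \<omega> (k*2^i) \<le> B"
    and r: "r > 0" and rr: "r\<^sup>2 < \<rho>" and e: "\<epsilon> > 0"
  shows "eventually (\<lambda>N. (\<lambda>p. de (k*2^n) p - AA k r N n p) \<in> LL \<omega> \<and>
                        wnorm \<omega> (\<lambda>p. de (k*2^n) p - AA k r N n p) < \<epsilon>) sequentially"
proof -
  have k0: "k > 0" using k by simp
  have B0: "B \<ge> 0"
  proof -
    have "1 \<le> k*2^0" using k by simp
    then have "\<omega> (k*2^0) > 0" using wpos by blast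
    then have "0 \<le> \<rho>^0 / \<omega> (k*2^0)" by simp
    then show ?thesis using B by (meson order_trans)
  qed
  define q where "q = r\<^sup>2 / \<rho>"
  define s where "s = sqrt q"
  have q0: "0 < q" "q < 1" using r rr rho by (auto simp: q_def)
  have s0: "0 < s" "s < 1" using q0 by (auto simp: s_def)
  have sq: "s\<^sup>2 = q" using q0 by (simp add: s_def)
  define C where "C = B / (r^n)\<^sup>2"
  have C0: "C \<ge> 0" using B0 by (simp add: C_def)
  have lim: "(\<lambda>N. C / (1 - s) * s^N) \<longlonglongrightarrow> C / (1 - s) * 0"
    by (intro tendsto_mult tendsto_const LIMSEQ_power_zero) (use s0 in simp)
  have ev1: "eventually (\<lambda>N. C / (1 - s) * s^N < \<epsilon>\<^sup>2) sequentially"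
    using order_tendstoD(2)[OF lim] e by simp
  have ev2: "eventually (\<lambda>N. n < N) sequentially" by (rule eventually_gt_at_top)
  show ?thesis
  proof (rule eventually_mono[OF eventually_conj[OF ev1 ev2]])
    fix N assume h: "C / (1 - s) * s^N < \<epsilon>\<^sup>2 \<and> n < N"
    then have nN: "n < N" and small: "C / (1 - s) * s^N < \<epsilon>\<^sup>2" by auto
    have N0: "N > 0" using nN by simp
    define tt where "tt i = (if i = n then 1 else 0) - (if N dvd (i + n*(N-1)) then complex_of_real (r^i / r^n) else 0)" for i
    have eqf: "(\<lambda>p. de (k*2^n) p - AA k r N n p) = chg k tt"
    proof
      fix p
      show "de (k*2^n) p - AA k r N n p = chg k tt p"
      proof (cases "\<exists>i. p = k*2^i")
        case True
        then obtain i where i: "p = k*2^i" by blast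
        show ?thesis unfolding i de_chg[OF k0] chg_at[OF k0] AA_at[OF k0 N0 r] tt_def by simp
      next
        case False
        then show ?thesis by (simp add: de_chg[OF k0] chg_off AA_off)
      qed
    qed
    have ttb: "B * (cmod (tt i))\<^sup>2 / \<rho>^i \<le> C * s^N * s^i" for i
    proof (cases "i \<noteq> n \<and> N dvd (i + n*(N-1))")
      case True
      then have iN: "N \<le> i" using tail_idx[OF nN] by blast
      have "tt i = - complex_of_real (r^i / r^n)" using True by (simp add: tt_def)
      then have "(cmod (tt i))\<^sup>2 = (r^i / r^n)\<^sup>2" using r by (simp add: norm_divide norm_power)
      also have "\<dots> = (r\<^sup>2)^i / (r^n)\<^sup>2" by (simp add: power_divide pow_sq_swap)
      finally have "B * (cmod (tt i))\<^sup>2 / \<rho>^i = C * ((r\<^sup>2)^i / \<rho>^i)" by (simp add: C_def)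
      also have "(r\<^sup>2)^i / \<rho>^i = q^i" by (simp add: q_def power_divide)
      also have "q^i = s^i * s^i" unfolding sq[symmetric] power2_eq_square by (rule power_mult_distrib)
      also have "s^i * s^i \<le> s^N * s^i"
        by (rule mult_right_mono) (use s0 iN in \<open>auto intro: power_decreasing\<close>)
      finally show ?thesis using C0 by (simp add: mult_left_mono mult.assoc)
    next
      case False
      then have "tt i = 0"
      proof (cases "i = n")
        case True
        have "n + n*(N-1) = N*n" using N0 by (cases N) (simp_all add: algebra_simps)
        then have "N dvd (i + n*(N-1))" using True by simp
        then show ?thesis using True r by (simp add: tt_def)
      next
        case F: False
        then show ?thesis using False by (simp add: tt_def)
      qed
      then show ?thesis using C0 s0 by simp
    qed
    have sm2: "summable (\<lambda>i. C * s^N * s^i)"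
      by (intro summable_mult summable_geometric) (use s0 in simp)
    have nn: "0 \<le> B * (cmod (tt i))\<^sup>2 / \<rho>^i" for i using B0 rho by simp
    have nb: "norm (B * (cmod (tt i))\<^sup>2 / \<rho>^i) \<le> C * s^N * s^i" for i
    proof -
      have "norm (B * (cmod (tt i))\<^sup>2 / \<rho>^i) = B * (cmod (tt i))\<^sup>2 / \<rho>^i"
        unfolding real_norm_def by (rule abs_of_nonneg[OF nn])
      then show ?thesis using ttb[of i] by simp
    qed
    have sm1: "summable (\<lambda>i. B * (cmod (tt i))\<^sup>2 / \<rho>^i)"
      by (rule summable_comparison_test'[OF sm2 nb])
    have L: "chg k tt \<in> LL \<omega> \<and> WW \<omega> (chg k tt) \<le> (\<Sum>i. B * (cmod (tt i))\<^sup>2 / \<rho>^i)"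
      by (rule chg_LL[OF wpos k rho B sm1])
    have "(\<Sum>i. B * (cmod (tt i))\<^sup>2 / \<rho>^i) \<le> (\<Sum>i. C * s^N * s^i)"
      by (rule suminf_le[OF ttb sm1 sm2])
    also have "(\<Sum>i. C * s^N * s^i) = C * s^N * (1 / (1 - s))"
      using s0 by (subst suminf_mult) (simp_all add: suminf_geometric)
    also have "\<dots> = C / (1 - s) * s^N" by simp
    finally have W: "WW \<omega> (chg k tt) < \<epsilon>\<^sup>2" using L small by linarith
    have "wnorm \<omega> (chg k tt) < \<epsilon>"
    proof -
      have "sqrt (WW \<omega> (chg k tt)) < sqrt (\<epsilon>\<^sup>2)" using W by (rule real_sqrt_less_mono)
      then show ?thesis using e by (simp add: wnorm_WW)
    qed
    then show "(\<lambda>p. de (k*2^n) p - AA k r N n p) \<in> LL \<omega> \<and>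
               wnorm \<omega> (\<lambda>p. de (k*2^n) p - AA k r N n p) < \<epsilon>"
      unfolding eqf using L by simp
  qed
qed

end

definition Sr :: "(nat \<Rightarrow> real) \<Rightarrow> real \<Rightarrow> (nat \<Rightarrow> complex) set" where
  "Sr \<omega> r = (\<Union>\<mu>\<in>{\<mu>. cmod \<mu> = r}. eigsp \<omega> \<mu>)"

lemma odd_decomp: "(x::nat) > 0 \<Longrightarrow> \<exists>k n. odd k \<and> x = k*2^n"
proof (induction x rule: less_induct)
  case (less x)
  show ?case
  proof (cases "odd x")
    case True
    then show ?thesis by (intro exI[of _ x] exI[of _ 0]) simp
  next
    case False
    then obtain y where y: "x = 2*y" by blast
    then have "y < x" "y > 0" using less.prems by auto
    then obtain k n where "odd k" "y = k*2^n" using less.IH by blast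
    then show ?thesis using y by (intro exI[of _ k] exI[of _ "Suc n"]) simp
  qed
qed

context
  fixes \<omega> :: "nat \<Rightarrow> real" and \<delta> \<rho> r :: real
  assumes wpos: "\<forall>n\<ge>1. 0 < \<omega> n"
    and dpos: "\<delta> > 0" and dle: "\<forall>n\<ge>1. \<delta> \<le> \<omega> n"
    and rho1: "\<rho> > 1"
    and Bd: "\<forall>k\<ge>3. \<exists>B. \<forall>i. \<rho>^i / \<omega> (k*2^i) \<le> B"
    and r0: "r > 0" and rr: "r\<^sup>2 < \<rho>"
begin

lemma rho0: "\<rho> > 0" using rho1 by simp

lemma Sr_LL: "Sr \<omega> r \<subseteq> LL \<omega>"
  unfolding Sr_def eigsp_def using Xw_LL by blast

lemma de_LL: "x \<ge> 3 \<Longrightarrow> de x \<in> LL \<omega>"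
proof -
  assume x: "x \<ge> 3"
  have "(\<lambda>n. (cmod (de x n))\<^sup>2 / \<omega> n) = (\<lambda>n. if n = x then 1 / \<omega> n else 0)"
    by (rule ext) (simp add: de_def)
  then have "summable (\<lambda>n. (cmod (de x n))\<^sup>2 / \<omega> n)" by simp
  then show ?thesis using x by (simp add: LL_def de_def)
qed

lemma mu_sq: "(cmod (mu r N j))\<^sup>2 < \<rho>"
  using mu_norm[of r N j] r0 rr by simp

lemma mu_Sr: "x \<in> eigsp \<omega> (mu r N j) \<Longrightarrow> x \<in> Sr \<omega> r"
  unfolding Sr_def using mu_norm[of r N j] r0 by auto

lemma wnorm_sub2:
  assumes "a \<in> LL \<omega>" "b \<in> LL \<omega>"
  shows "wnorm \<omega> (\<lambda>p. a p - b p) \<le> wnorm \<omega> a + wnorm \<omega> b"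
proof -
  have "(\<lambda>p. a p - b p) = (\<lambda>p. a p + (-1) * b p)" by simp
  moreover have "wnorm \<omega> (\<lambda>p. a p + (-1) * b p) \<le> wnorm \<omega> a + wnorm \<omega> (\<lambda>p. (-1) * b p)"
    by (rule wnorm_triangle[OF wpos assms(1) LL_scale[OF wpos assms(2)]])
  moreover have "wnorm \<omega> (\<lambda>p. (-1) * b p) = wnorm \<omega> b" using wnorm_scale[OF wpos assms(2), of "-1"] by simp
  ultimately show ?thesis by simp
qed

lemma apx_pair:
  assumes k: "odd k" "k \<ge> 3"
  shows "apx \<omega> (Sr \<omega> r) (\<lambda>p. de (k*2^n) p - de ((3*k+1)*2^n) p)"
  unfolding apx_def
proof (intro conjI allI impI)
  have k1: "3*k+1 \<ge> 3" using k by simp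
  obtain B1 where B1: "\<forall>i. \<rho>^i / \<omega> (k*2^i) \<le> B1" using Bd k by blast
  obtain B2 where B2: "\<forall>i. \<rho>^i / \<omega> ((3*k+1)*2^i) \<le> B2" using Bd k1 by blast
  have "k \<le> k*2^n" by simp
  then have x1: "k*2^n \<ge> 3" using k by linarith
  have "(3*k+1)*1 \<le> (3*k+1)*2^n" by (rule mult_le_mono2) simp
  then have x2: "(3*k+1)*2^n \<ge> 3" using k1 by simp
  show "(\<lambda>p. de (k*2^n) p - de ((3*k+1)*2^n) p) \<in> LL \<omega>"
    by (rule LL_diff[OF wpos de_LL[OF x1] de_LL[OF x2]])
  fix \<epsilon> :: real assume e: "\<epsilon> > 0"
  have e2: "\<epsilon>/2 > 0" using e by simp
  have ev: "eventually (\<lambda>N. ((\<lambda>p. de (k*2^n) p - AA k r N n p) \<in> LL \<omega> \<and>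
                        wnorm \<omega> (\<lambda>p. de (k*2^n) p - AA k r N n p) < \<epsilon>/2) \<and>
                       ((\<lambda>p. de ((3*k+1)*2^n) p - AA (3*k+1) r N n p) \<in> LL \<omega> \<and>
                        wnorm \<omega> (\<lambda>p. de ((3*k+1)*2^n) p - AA (3*k+1) r N n p) < \<epsilon>/2)) sequentially"
    by (rule eventually_conj[OF coeff_extract[OF wpos k(2) rho0 B1 r0 rr e2] coeff_extract[OF wpos k1 rho0 B2 r0 rr e2]])
  then obtain N where N: "(\<lambda>p. de (k*2^n) p - AA k r N n p) \<in> LL \<omega>"
      "wnorm \<omega> (\<lambda>p. de (k*2^n) p - AA k r N n p) < \<epsilon>/2"
      "(\<lambda>p. de ((3*k+1)*2^n) p - AA (3*k+1) r N n p) \<in> LL \<omega>"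
      "wnorm \<omega> (\<lambda>p. de ((3*k+1)*2^n) p - AA (3*k+1) r N n p) < \<epsilon>/2"
    unfolding eventually_sequentially by blast
  define d where "d = (\<lambda>p. \<Sum>j<N. cf r N n j * Ev k (mu r N j) p)"
  have dS: "d \<in> cspan (Sr \<omega> r)" unfolding d_def
    by (rule cspan_single) (use Ev_eig[OF wpos k rho0 B1 B2 mu_sq] mu_Sr in blast)
  have dL: "d \<in> LL \<omega>" using cspan_LL[OF wpos Sr_LL] dS by blast
  have dAA: "d = (\<lambda>p. AA k r N n p - AA (3*k+1) r N n p)"
    by (rule ext) (simp add: d_def AA_def Ev_def right_diff_distrib sum_subtractf)
  have "(\<lambda>p. de (k*2^n) p - de ((3*k+1)*2^n) p - d p) =
        (\<lambda>p. (de (k*2^n) p - AA k r N n p) - (de ((3*k+1)*2^n) p - AA (3*k+1) r N n p))"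
    unfolding dAA by (rule ext) simp
  moreover have "wnorm \<omega> (\<lambda>p. (de (k*2^n) p - AA k r N n p) - (de ((3*k+1)*2^n) p - AA (3*k+1) r N n p)) < \<epsilon>"
    using wnorm_sub2[OF N(1) N(3)] N(2) N(4) by simp
  ultimately show "\<exists>d\<in>cspan (Sr \<omega> r). d \<in> LL \<omega> \<and> wnorm \<omega> (\<lambda>p. de (k*2^n) p - de ((3*k+1)*2^n) p - d p) < \<epsilon>"
    using dS dL by auto
qed

lemma apx_four: "apx \<omega> (Sr \<omega> r) (de (4*2^n))"
  unfolding apx_def
proof (intro conjI allI impI)
  have k: "(4::nat) \<ge> 3" by simp
  obtain B where B: "\<forall>i. \<rho>^i / \<omega> (4*2^i) \<le> B" using Bd k by blast
  have "(4::nat) \<le> 4*2^n" by simp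
  then have x1: "4*2^n \<ge> (3::nat)" by linarith
  show "de (4*2^n) \<in> LL \<omega>" by (rule de_LL[OF x1])
  fix \<epsilon> :: real assume e: "\<epsilon> > 0"
  have ev: "eventually (\<lambda>N. (\<lambda>p. de (4*2^n) p - AA 4 r N n p) \<in> LL \<omega> \<and>
                        wnorm \<omega> (\<lambda>p. de (4*2^n) p - AA 4 r N n p) < \<epsilon>) sequentially"
    by (rule coeff_extract[OF wpos k rho0 B r0 rr e])
  then obtain N where N: "(\<lambda>p. de (4*2^n) p - AA 4 r N n p) \<in> LL \<omega>"
      "wnorm \<omega> (\<lambda>p. de (4*2^n) p - AA 4 r N n p) < \<epsilon>"
    unfolding eventually_sequentially by blast
  define d where "d = (\<lambda>p. \<Sum>j<N. cf r N n j * chg 4 (\<lambda>i. (mu r N j)^i) p)"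
  have dS: "d \<in> cspan (Sr \<omega> r)" unfolding d_def
    by (rule cspan_single) (use ch4_eig[OF wpos rho0 B mu_sq] mu_Sr in blast)
  have dL: "d \<in> LL \<omega>" using cspan_LL[OF wpos Sr_LL] dS by blast
  have dAA: "d = AA 4 r N n" by (rule ext) (simp add: d_def AA_def)
  show "\<exists>d\<in>cspan (Sr \<omega> r). d \<in> LL \<omega> \<and> wnorm \<omega> (\<lambda>p. de (4*2^n) p - d p) < \<epsilon>"
    using dS dL N(2) unfolding dAA by auto
qed

lemma step_apx: "x \<ge> 3 \<Longrightarrow> \<exists>y>x. apx \<omega> (Sr \<omega> r) (\<lambda>p. de x p - de y p)"
proof -
  assume x: "x \<ge> 3"
  obtain k n where kn: "odd k" "x = k*2^n" using odd_decomp[of x] x by auto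
  show ?thesis
  proof (cases "k = 1")
    case True
    then have xn: "x = 2^n" using kn by simp
    have "n \<ge> 2"
    proof (rule ccontr)
      assume "\<not> n \<ge> 2"
      then have "n = 0 \<or> n = 1" by auto
      then show False using x xn by auto
    qed
    define m where "m = n - 2"
    have m: "n = Suc (Suc m)" using \<open>n \<ge> 2\<close> by (simp add: m_def)
    have a1: "x = 4*2^m" using xn m by simp
    have a2: "2*x = 4*2^(Suc m)" using xn m by simp
    have "apx \<omega> (Sr \<omega> r) (\<lambda>p. de (4*2^m) p - de (4*2^(Suc m)) p)"
      by (rule apx_diff[OF wpos apx_four apx_four])
    then have "apx \<omega> (Sr \<omega> r) (\<lambda>p. de x p - de (2*x) p)" unfolding a1 a2 by simp
    moreover have "2*x > x" using x by simp
    ultimately show ?thesis by blast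
  next
    case False
    then have k3: "k \<ge> 3" using kn(1) by presburger
    have "(3*k+1)*2^n > k*2^n" by simp
    then show ?thesis using apx_pair[OF kn(1) k3, of n] kn(2) by blast
  qed
qed

end

context
  fixes \<omega> :: "nat \<Rightarrow> real" and \<delta> \<rho> r :: real
  assumes wpos: "\<forall>n\<ge>1. 0 < \<omega> n"
    and dpos: "\<delta> > 0" and dle: "\<forall>n\<ge>1. \<delta> \<le> \<omega> n"
    and rho1: "\<rho> > 1"
    and Bd: "\<forall>k\<ge>3. \<exists>B. \<forall>i. \<rho>^i / \<omega> (k*2^i) \<le> B"
    and r0: "r > 0" and rr: "r\<^sup>2 < \<rho>"
begin

lemma wnorm_lt: "WW \<omega> c < \<epsilon>\<^sup>2 \<Longrightarrow> \<epsilon> > 0 \<Longrightarrow> wnorm \<omega> c < \<epsilon>"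
proof -
  assume W: "WW \<omega> c < \<epsilon>\<^sup>2" and e: "\<epsilon> > 0"
  have "sqrt (WW \<omega> c) < sqrt (\<epsilon>\<^sup>2)" using W by (rule real_sqrt_less_mono)
  then show ?thesis using e by (simp add: wnorm_WW)
qed

lemma e_apx:
  assumes x: "x \<ge> 3"
  shows "apx \<omega> (Sr \<omega> r) (de x)"
proof -
  let ?S = "Sr \<omega> r"
  have "\<forall>x. \<exists>y. 3 \<le> x \<longrightarrow> x < y \<and> apx \<omega> ?S (\<lambda>p. de x p - de y p)"
    using step_apx[OF wpos dpos dle rho1 Bd r0 rr] by blast
  from choice[OF this] obtain sf where sf: "\<forall>x. 3 \<le> x \<longrightarrow> x < sf x \<and> apx \<omega> ?S (\<lambda>p. de x p - de (sf x) p)"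
    by blast
  define xs where "xs m = (sf ^^ m) x" for m
  have xs0: "xs 0 = x" by (simp add: xs_def)
  have xsS: "xs (Suc m) = sf (xs m)" for m by (simp add: xs_def)
  have xs3: "xs m \<ge> 3" for m
  proof (induction m)
    case 0 then show ?case using x xs0 by simp
  next
    case (Suc m) then show ?case using sf xsS[of m] by (metis less_imp_le order_trans)
  qed
  have xslt: "xs m < xs (Suc m)" for m using sf xs3[of m] xsS[of m] by simp
  have smo: "strict_mono xs" using xslt strict_mono_Suc_iff by blast
  have inj: "inj xs" using strict_mono_imp_inj_on[OF smo] .
  have ap: "apx \<omega> ?S (\<lambda>p. de x p - de (xs m) p)" for m
  proof (induction m)
    case 0
    have "(\<lambda>p. de x p - de (xs 0) p) = (\<lambda>p. 0)" using xs0 by simp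
    then show ?case using apx_zero[OF wpos] by simp
  next
    case (Suc m)
    have st: "apx \<omega> ?S (\<lambda>p. de (xs m) p - de (xs (Suc m)) p)" using sf xs3[of m] xsS[of m] by simp
    have "apx \<omega> ?S (\<lambda>p. (de x p - de (xs m) p) + (de (xs m) p - de (xs (Suc m)) p))"
      by (rule apx_add[OF wpos Suc.IH st])
    then show ?case by simp
  qed
  show ?thesis
  proof (rule apx_closed[OF wpos de_LL[OF wpos dpos dle rho1 Bd r0 rr x]])
    fix \<epsilon> :: real assume e: "\<epsilon> > 0"
    obtain M0 :: nat where M0: "1 / (\<delta> * \<epsilon>\<^sup>2) < real M0" using reals_Archimedean2 by blast
    define M where "M = Suc M0"
    have M: "M > 0" "1 / (\<delta> * \<epsilon>\<^sup>2) < real M" using M0 by (auto simp: M_def)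
    have Mb: "1 / (real M * \<delta>) < \<epsilon>\<^sup>2"
    proof -
      have pe: "\<delta> * \<epsilon>\<^sup>2 > 0" using dpos e by simp
      have "1 < real M * (\<delta> * \<epsilon>\<^sup>2)" using M(2) pe by (simp add: divide_less_eq)
      then show ?thesis using M(1) dpos by (simp add: divide_less_eq mult_ac)
    qed
    define w where "w = (\<lambda>p. complex_of_real (1 / real M) * (\<Sum>m<M. de x p - de (xs m) p))"
    have wa: "apx \<omega> ?S w" unfolding w_def
      by (rule apx_scale[OF wpos apx_sum[OF wpos]]) (rule ap)
    define F where "F = xs ` {..<M}"
    have Ffin: "finite F" by (simp add: F_def)
    have Fc: "card F \<le> M" unfolding F_def using card_image_le[of "{..<M}" xs] by simp
    have F3: "p \<in> F \<Longrightarrow> p \<ge> 3" for p using xs3 by (auto simp: F_def)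
    define u where "u = (\<lambda>p. if p \<in> F then complex_of_real (1 / real M) else 0)"
    have sumd: "(\<Sum>m<M. de (xs m) p) = (if p \<in> F then 1 else 0)" for p
    proof (cases "p \<in> F")
      case True
      then obtain m0 where m0: "m0 < M" "p = xs m0" by (auto simp: F_def)
      have "(\<Sum>m<M. de (xs m) p) = (\<Sum>m<M. if m0 = m then 1 else 0)"
        by (rule sum.cong[OF refl]) (use inj m0 in \<open>auto simp: de_def inj_eq\<close>)
      also have "\<dots> = 1" using m0 by simp
      finally show ?thesis using True by simp
    next
      case False
      then have "\<forall>m<M. p \<noteq> xs m" by (auto simp: F_def)
      then show ?thesis using False by (simp add: de_def)
    qed
    have wu: "(\<lambda>p. de x p - w p) = u"
    proof
      fix p
      have "(\<Sum>m<M. de x p - de (xs m) p) = of_nat M * de x p - (\<Sum>m<M. de (xs m) p)"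
        by (simp add: sum_subtractf)
      then have "w p = complex_of_real (1 / real M) * (of_nat M * de x p - (\<Sum>m<M. de (xs m) p))"
        by (simp add: w_def)
      also have "\<dots> = de x p - complex_of_real (1 / real M) * (\<Sum>m<M. de (xs m) p)"
        using M(1) by (simp add: field_simps)
      finally show "de x p - w p = u p" by (simp add: u_def sumd)
    qed
    have tu: "(cmod (u p))\<^sup>2 / \<omega> p = (if p \<in> F then (1 / real M)\<^sup>2 / \<omega> p else 0)" for p
      by (simp add: u_def norm_divide)
    have "WW \<omega> u = (\<Sum>p\<in>F. (1 / real M)\<^sup>2 / \<omega> p)"
      unfolding WW_def tu by (rule sums_unique[symmetric, OF sums_If_finite_set[OF Ffin]])
    also have "\<dots> \<le> (\<Sum>p\<in>F. (1 / real M)\<^sup>2 / \<delta>)"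
    proof (rule sum_mono)
      fix p assume "p \<in> F"
      then have "p \<ge> 1" using F3 by fastforce
      then have "\<delta> \<le> \<omega> p" using dle by simp
      then show "(1 / real M)\<^sup>2 / \<omega> p \<le> (1 / real M)\<^sup>2 / \<delta>"
        using dpos by (intro divide_left_mono) auto
    qed
    also have "\<dots> = real (card F) * ((1 / real M)\<^sup>2 / \<delta>)" by simp
    also have "\<dots> \<le> real M * ((1 / real M)\<^sup>2 / \<delta>)"
      by (rule mult_right_mono) (use Fc dpos in auto)
    also have "\<dots> = 1 / (real M * \<delta>)" using M(1) by (simp add: power2_eq_square)
    finally have "WW \<omega> u < \<epsilon>\<^sup>2" using Mb by linarith
    then have "wnorm \<omega> u < \<epsilon>" using e by (rule wnorm_lt)
    then show "\<exists>w. apx \<omega> ?S w \<and> wnorm \<omega> (\<lambda>n. de x n - w n) < \<epsilon>"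
      using wa wu by auto
  qed
qed

lemma all_apx:
  assumes c: "c \<in> LL \<omega>"
  shows "apx \<omega> (Sr \<omega> r) c"
proof (rule apx_closed[OF wpos c])
  fix \<epsilon> :: real assume e: "\<epsilon> > 0"
  define g where "g = (\<lambda>p. (cmod (c p))\<^sup>2 / \<omega> p)"
  have sg: "summable g" using c by (simp add: LL_def g_def)
  have "eventually (\<lambda>K. dist (\<Sum>p<K. g p) (suminf g) < \<epsilon>\<^sup>2) sequentially"
    by (rule tendstoD[OF summable_LIMSEQ[OF sg]]) (use e in simp)
  then obtain K where K: "dist (\<Sum>p<K. g p) (suminf g) < \<epsilon>\<^sup>2"
    unfolding eventually_sequentially by blast
  define w where "w = (\<lambda>p. \<Sum>x<K. c x * de x p)"
  have wa: "apx \<omega> (Sr \<omega> r) w" unfolding w_def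
  proof (rule apx_sum[OF wpos])
    fix x assume "x < K"
    show "apx \<omega> (Sr \<omega> r) (\<lambda>p. c x * de x p)"
    proof (cases "x < 3")
      case True
      then have "c x = 0" using c by (simp add: LL_def)
      then show ?thesis using apx_zero[OF wpos] by simp
    next
      case False
      then show ?thesis by (intro apx_scale[OF wpos] e_apx) simp
    qed
  qed
  have cw: "(\<lambda>p. c p - w p) = (\<lambda>p. if p \<in> {..<K} then 0 else c p)"
  proof
    fix p
    have "w p = (\<Sum>x\<in>{..<K}. if p = x then c x else 0)"
      unfolding w_def by (rule sum.cong[OF refl]) (simp add: de_def)
    also have "\<dots> = (if p \<in> {..<K} then c p else 0)" by (rule sum.delta') simp
    finally show "c p - w p = (if p \<in> {..<K} then 0 else c p)" by simp
  qed
  have h: "(\<lambda>p. (cmod (if p \<in> {..<K} then 0 else c p))\<^sup>2 / \<omega> p) = (\<lambda>p. g p - (if p \<in> {..<K} then g p else 0))"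
    by (rule ext) (simp add: g_def)
  have "WW \<omega> (\<lambda>p. c p - w p) = (\<Sum>p. g p - (if p \<in> {..<K} then g p else 0))"
    unfolding WW_def cw h ..
  also have "\<dots> = suminf g - (\<Sum>p. if p \<in> {..<K} then g p else 0)"
    by (rule suminf_diff[OF sg summable_If_finite_set[OF finite_lessThan], symmetric])
  also have "(\<Sum>p. if p \<in> {..<K} then g p else 0) = (\<Sum>p\<in>{..<K}. g p)"
    by (rule sums_unique[symmetric, OF sums_If_finite_set]) simp
  finally have "WW \<omega> (\<lambda>p. c p - w p) < \<epsilon>\<^sup>2" using K by (simp add: dist_real_def)
  then have "wnorm \<omega> (\<lambda>p. c p - w p) < \<epsilon>" using e by (rule wnorm_lt)
  then show "\<exists>w. apx \<omega> (Sr \<omega> r) w \<and> wnorm \<omega> (\<lambda>n. c n - w n) < \<epsilon>" using wa by blast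
qed

lemma dense_S:
  assumes S: "Sr \<omega> r \<subseteq> S"
  shows "dense_in_Xw \<omega> (cspan S)"
  unfolding dense_in_Xw_def
proof (intro ballI allI impI)
  fix c \<epsilon> assume c: "c \<in> Xw \<omega>" and e: "(\<epsilon>::real) > 0"
  have "apx \<omega> S c" using apx_mono[OF wpos S all_apx] c Xw_LL by blast
  then show "\<exists>d\<in>cspan S. wnorm \<omega> (\<lambda>n. c n - d n) < \<epsilon>" using e unfolding apx_def by blast
qed

end

lemma gs_general:
  assumes wpos: "\<forall>n\<ge>1. 0 < \<omega> n"
    and dl: "\<exists>\<delta>>0. \<forall>n\<ge>1. \<delta> \<le> \<omega> n"
    and rh: "\<exists>\<rho>::real. \<rho> > 1 \<and> (\<forall>k\<ge>3. \<exists>B. \<forall>n. \<bar>\<rho> ^ n / \<omega> (k * 2 ^ n)\<bar> \<le> B)"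
  shows "godefroy_shapiro \<omega>"
proof -
  obtain \<delta> where dpos: "\<delta> > 0" and dle: "\<forall>n\<ge>1. \<delta> \<le> \<omega> n" using dl by blast
  obtain \<rho> :: real where rho1: "\<rho> > 1" and B0: "\<forall>k\<ge>3. \<exists>B. \<forall>n. \<bar>\<rho> ^ n / \<omega> (k * 2 ^ n)\<bar> \<le> B"
    using rh by blast
  have Bd: "\<forall>k\<ge>3. \<exists>B. \<forall>i. \<rho>^i / \<omega> (k*2^i) \<le> B"
  proof (intro allI impI)
    fix k :: nat assume "k \<ge> 3"
    then obtain B where "\<forall>n. \<bar>\<rho> ^ n / \<omega> (k * 2 ^ n)\<bar> \<le> B" using B0 by blast
    then have "\<forall>i. \<rho>^i / \<omega> (k*2^i) \<le> B" by (meson abs_le_D1)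
    then show "\<exists>B. \<forall>i. \<rho>^i / \<omega> (k*2^i) \<le> B" by blast
  qed
  define r1 :: real where "r1 = 1/2"
  have r1: "r1 > 0" "r1\<^sup>2 < \<rho>" using rho1 by (auto simp: r1_def power2_eq_square)
  define r2 :: real where "r2 = sqrt ((1 + \<rho>) / 2)"
  have r2sq: "r2\<^sup>2 = (1 + \<rho>) / 2" using rho1 by (simp add: r2_def)
  have r2: "r2 > 0" "r2\<^sup>2 < \<rho>" using rho1 r2sq by (auto simp: r2_def)
  have r2gt: "r2 > 1" using rho1 by (simp add: r2_def)
  have S1: "Sr \<omega> r1 \<subseteq> (\<Union>\<mu>\<in>{\<mu>. cmod \<mu> < 1}. eigsp \<omega> \<mu>)"
    unfolding Sr_def by (rule UN_mono) (auto simp: r1_def)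
  have S2: "Sr \<omega> r2 \<subseteq> (\<Union>\<mu>\<in>{\<mu>. cmod \<mu> > 1}. eigsp \<omega> \<mu>)"
    unfolding Sr_def by (rule UN_mono) (use r2gt in auto)
  show ?thesis unfolding godefroy_shapiro_def
    using dense_S[OF wpos dpos dle rho1 Bd r1 S1] dense_S[OF wpos dpos dle rho1 Bd r2 S2] by blast
qed

lemma omega0_ok: "godefroy_shapiro omega0"
proof (rule gs_general)
  show "\<forall>n\<ge>1. 0 < omega0 n" by (simp add: omega0_def)
  show "\<exists>\<delta>>0. \<forall>n\<ge>1. \<delta> \<le> omega0 n"
    by (rule exI[of _ "1/pi"]) (auto simp: omega0_def divide_right_mono)
  show "\<exists>\<rho>::real. \<rho> > 1 \<and> (\<forall>k\<ge>3. \<exists>B. \<forall>n. \<bar>\<rho> ^ n / omega0 (k * 2 ^ n)\<bar> \<le> B)"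
  proof (rule exI[of _ 2], intro conjI allI impI)
    fix k :: nat assume k: "k \<ge> 3"
    have "\<bar>2 ^ n / omega0 (k * 2 ^ n)\<bar> \<le> pi" for n
    proof -
      have pos: "real (k * 2^n) + 1 > 0" using of_nat_0_le_iff[of "k*2^n"] by linarith
      have le: "(2::real)^n \<le> real (k * 2^n) + 1"
      proof -
        have A: "1 * (2::real)^n \<le> real k * 2^n" by (rule mult_right_mono) (use k in simp_all)
        have Bq: "real (k*2^n) = real k * 2^n" by simp
        show ?thesis using A Bq by linarith
      qed
      have "2 ^ n / omega0 (k * 2 ^ n) = pi * (2^n / (real (k * 2^n) + 1))"
        by (simp add: omega0_def)
      also have "\<dots> \<le> pi * 1"
        by (rule mult_left_mono) (use le pos in \<open>auto simp: divide_le_eq\<close>)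
      finally have "2 ^ n / omega0 (k * 2 ^ n) \<le> pi" by simp
      moreover have "0 \<le> 2 ^ n / omega0 (k * 2 ^ n)" by (simp add: omega0_def)
      ultimately show ?thesis by simp
    qed
    then show "\<exists>B. \<forall>n. \<bar>2 ^ n / omega0 (k * 2 ^ n)\<bar> \<le> B" by blast
  qed simp
qed

theorem theorem3p6:
  shows "(\<forall>\<omega>::nat \<Rightarrow> real.
            (\<forall>n\<ge>1. 0 < \<omega> n)
          \<and> (\<exists>\<delta>>0. \<forall>n\<ge>1. \<delta> \<le> \<omega> n)
          \<and> T_bounded \<omega>
          \<and> (\<exists>\<rho>::real. \<rho> > 1 \<and> (\<forall>k\<ge>3. \<exists>B. \<forall>n. \<bar>\<rho> ^ n / \<omega> (k * 2 ^ n)\<bar> \<le> B))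
          \<longrightarrow> godefroy_shapiro \<omega>)
        \<and> godefroy_shapiro omega0"
  using gs_general omega0_ok by blast

end
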